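(* Let $X,Y$ be Banach spaces, let $-A$ be the generator of a strongly continuous semigroup $(T(t))_{t\ge0}$ on $X$, and let $C:\mathcal D(A)\to Y$ be linear and bounded for the graph norm. Suppose $(A,C)$ is an admissible BFC-system and $T(t)$ is a compact operator for some $t>0$. Then $X$ is finite-dimensional.
   Context: For $\tau\in(0,\infty]$ set $M(\tau)^2:=\sup_{x\in\mathcal D(A),\|x\|=1}\int_0^\tau\|CT(t)x\|_Y^2\,dt$ and $m(\tau)^2:=\inf_{x\in\mathcal D(A),\|x\|=1}\int_0^\tau\|CT(t)x\|_Y^2\,dt$. $C$ is admissible in time $\tau$ if $M(\tau)<\infty$, exactly observable in time $\eta$ if $m(\eta)>0$. $(A,C)$ is a BFC-system if there exist $0<\eta<\tau$ such that $C$ is admissible and exactly observable in time $\tau$ and $M(\eta)<m(\tau)$. *)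

theory Defs
  imports "HOL-Analysis.Analysis"
begin

text \<open>Strongly continuous (C0) semigroup on a Banach space, indexed by t \<ge> 0
  (values at negative times are irrelevant).\<close>
definition c0_semigroup :: "(real \<Rightarrow> 'x::banach \<Rightarrow>\<^sub>L 'x) \<Rightarrow> bool" where
  "c0_semigroup T \<longleftrightarrow>
     T 0 = id_blinfun \<and>
     (\<forall>s t. 0 \<le> s \<longrightarrow> 0 \<le> t \<longrightarrow> T (s + t) = T s o\<^sub>L T t) \<and>
     (\<forall>x. continuous_on {0..} (\<lambda>t. blinfun_apply (T t) x))"

definition gen_dom :: "(real \<Rightarrow> 'x::banach \<Rightarrow>\<^sub>L 'x) \<Rightarrow> 'x set" where
  "gen_dom T = {x. \<exists>y. ((\<lambda>h. (1 / h) *\<^sub>R (blinfun_apply (T h) x - x)) \<longlongrightarrow> y) (at_right 0)}"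

text \<open>The generator G of T (meaningful on gen_dom T).\<close>
definition gen :: "(real \<Rightarrow> 'x::banach \<Rightarrow>\<^sub>L 'x) \<Rightarrow> 'x \<Rightarrow> 'x" where
  "gen T x = Lim (at_right 0) (\<lambda>h. (1 / h) *\<^sub>R (blinfun_apply (T h) x - x))"

definition is_minus_generator :: "(real \<Rightarrow> 'x::banach \<Rightarrow>\<^sub>L 'x) \<Rightarrow> ('x \<Rightarrow> 'x) \<Rightarrow> 'x set \<Rightarrow> bool" where
  "is_minus_generator T A D \<longleftrightarrow> D = gen_dom T \<and> (\<forall>x\<in>D. A x = - gen T x)"

definition graph_bounded_linear :: "('x::banach \<Rightarrow> 'x) \<Rightarrow> 'x set \<Rightarrow> ('x \<Rightarrow> 'y::banach) \<Rightarrow> bool" where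
  "graph_bounded_linear A D C \<longleftrightarrow>
     (\<forall>x\<in>D. \<forall>y\<in>D. C (x + y) = C x + C y) \<and>
     (\<forall>x\<in>D. \<forall>c. C (c *\<^sub>R x) = c *\<^sub>R C x) \<and>
     (\<exists>K. \<forall>x\<in>D. norm (C x) \<le> K * (norm x + norm (A x)))"

definition obs_energy :: "(real \<Rightarrow> 'x::banach \<Rightarrow>\<^sub>L 'x) \<Rightarrow> ('x \<Rightarrow> 'y::banach) \<Rightarrow> real \<Rightarrow> 'x \<Rightarrow> real" where
  "obs_energy T C \<tau> x = integral {0..\<tau>} (\<lambda>t. (norm (C (blinfun_apply (T t) x)))\<^sup>2)"

text \<open>M(\<tau>)^2 and m(\<tau>)^2 (finite \<tau>), as extended reals.\<close>
definition M_sq :: "(real \<Rightarrow> 'x::banach \<Rightarrow>\<^sub>L 'x) \<Rightarrow> 'x set \<Rightarrow> ('x \<Rightarrow> 'y::banach) \<Rightarrow> real \<Rightarrow> ereal" where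
  "M_sq T D C \<tau> = (SUP x\<in>{x\<in>D. norm x = 1}. ereal (obs_energy T C \<tau> x))"

definition m_sq :: "(real \<Rightarrow> 'x::banach \<Rightarrow>\<^sub>L 'x) \<Rightarrow> 'x set \<Rightarrow> ('x \<Rightarrow> 'y::banach) \<Rightarrow> real \<Rightarrow> ereal" where
  "m_sq T D C \<tau> = (INF x\<in>{x\<in>D. norm x = 1}. ereal (obs_energy T C \<tau> x))"

definition admissible_in_time where
  "admissible_in_time T D C \<tau> \<longleftrightarrow> M_sq T D C \<tau> < \<infinity>"

definition exactly_observable_in_time where
  "exactly_observable_in_time T D C \<tau> \<longleftrightarrow> m_sq T D C \<tau> > 0"

text \<open>BFC-system. Since M, m \<ge> 0, M(\<eta>) < m(\<tau>) iff M(\<eta>)^2 < m(\<tau>)^2.\<close>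
definition BFC_system where
  "BFC_system T D C \<longleftrightarrow>
     (\<exists>\<eta> \<tau>. 0 < \<eta> \<and> \<eta> < \<tau> \<and> admissible_in_time T D C \<tau> \<and>
        exactly_observable_in_time T D C \<tau> \<and> M_sq T D C \<eta> < m_sq T D C \<tau>)"

definition compact_op :: "('a::real_normed_vector \<Rightarrow>\<^sub>L 'b::real_normed_vector) \<Rightarrow> bool" where
  "compact_op S \<longleftrightarrow> compact (closure (blinfun_apply S ` ball 0 1))"

definition finite_dim_space :: "'a::real_vector itself \<Rightarrow> bool" where
  "finite_dim_space _ \<longleftrightarrow> (\<exists>B::'a set. finite B \<and> span B = UNIV)"

end

theory Submission
  imports Defs
begin


definition "Dq T x h = (1 / h) *\<^sub>R (blinfun_apply (T h) x - x)"

context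
  fixes T :: "real \<Rightarrow> 'x::banach \<Rightarrow>\<^sub>L 'x"
  assumes sg: "c0_semigroup T"
begin

lemma T0: "blinfun_apply (T 0) x = x"
  using sg by (simp add: c0_semigroup_def)

lemma Tadd: "0 \<le> s \<Longrightarrow> 0 \<le> t \<Longrightarrow> blinfun_apply (T (s + t)) x = blinfun_apply (T s) (blinfun_apply (T t) x)"
  using sg by (simp add: c0_semigroup_def)

lemma Tcont: "continuous_on {0..} (\<lambda>t. blinfun_apply (T t) x)"
  using sg by (simp add: c0_semigroup_def)

lemma gen_lim: "x \<in> gen_dom T \<Longrightarrow> (Dq T x \<longlongrightarrow> gen T x) (at_right 0)"
  unfolding gen_dom_def gen_def Dq_def
  by (auto intro: tendsto_Lim[OF trivial_limit_at_right_real, THEN subst] simp: tendsto_Lim trivial_limit_at_right_real)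

lemma gen_domI: "(Dq T x \<longlongrightarrow> y) (at_right 0) \<Longrightarrow> x \<in> gen_dom T"
  unfolding gen_dom_def Dq_def by auto

lemma gen_eq: "(Dq T x \<longlongrightarrow> y) (at_right 0) \<Longrightarrow> gen T x = y"
  unfolding gen_def Dq_def[abs_def] using tendsto_Lim trivial_limit_at_right_real
  by (metis Dq_def ext)

lemma Dq_diff: "Dq T (x - y) h = Dq T x h - Dq T y h"
  by (simp add: Dq_def blinfun.diff_right algebra_simps)

lemma Dq_add: "Dq T (x + y) h = Dq T x h + Dq T y h"
  by (simp add: Dq_def blinfun.add_right algebra_simps)

lemma Dq_scale: "Dq T (c *\<^sub>R x) h = c *\<^sub>R Dq T x h"
  by (simp add: Dq_def blinfun.scaleR_right algebra_simps)

lemma gen_diff: "x \<in> gen_dom T \<Longrightarrow> y \<in> gen_dom T \<Longrightarrow> x - y \<in> gen_dom T \<and> gen T (x - y) = gen T x - gen T y"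
proof -
  assume "x \<in> gen_dom T" "y \<in> gen_dom T"
  then have "(Dq T (x - y) \<longlongrightarrow> gen T x - gen T y) (at_right 0)"
    unfolding Dq_diff by (intro tendsto_diff gen_lim)
  then show ?thesis using gen_domI gen_eq by blast
qed

lemma gen_add: "x \<in> gen_dom T \<Longrightarrow> y \<in> gen_dom T \<Longrightarrow> x + y \<in> gen_dom T"
proof -
  assume "x \<in> gen_dom T" "y \<in> gen_dom T"
  then have "(Dq T (x + y) \<longlongrightarrow> gen T x + gen T y) (at_right 0)"
    unfolding Dq_add by (intro tendsto_add gen_lim)
  then show ?thesis using gen_domI by blast
qed

lemma gen_scale: "x \<in> gen_dom T \<Longrightarrow> c *\<^sub>R x \<in> gen_dom T"
proof -
  assume "x \<in> gen_dom T"
  then have "(Dq T (c *\<^sub>R x) \<longlongrightarrow> c *\<^sub>R gen T x) (at_right 0)"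
    unfolding Dq_scale by (intro tendsto_scaleR tendsto_const gen_lim)
  then show ?thesis using gen_domI by blast
qed

lemma gen_zero: "0 \<in> gen_dom T"
proof -
  have "Dq T 0 = (\<lambda>h. 0)" by (simp add: Dq_def[abs_def] blinfun.zero_right)
  then show ?thesis using gen_domI[of 0 0] by simp
qed

lemma gen_T: assumes "x \<in> gen_dom T" "0 \<le> t"
  shows "blinfun_apply (T t) x \<in> gen_dom T \<and> gen T (blinfun_apply (T t) x) = blinfun_apply (T t) (gen T x)"
proof -
  have "((\<lambda>h. blinfun_apply (T t) (Dq T x h)) \<longlongrightarrow> blinfun_apply (T t) (gen T x)) (at_right 0)"
    by (intro bounded_linear.tendsto[OF blinfun.bounded_linear_right] gen_lim assms)
  moreover have "eventually (\<lambda>h. blinfun_apply (T t) (Dq T x h) = Dq T (blinfun_apply (T t) x) h) (at_right 0)"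
  proof -
    have "eventually (\<lambda>h::real. h > 0) (at_right 0)" by (simp add: eventually_at_right_less)
    then show ?thesis
    proof eventually_elim
      case (elim h)
      have "blinfun_apply (T h) (blinfun_apply (T t) x) = blinfun_apply (T t) (blinfun_apply (T h) x)"
        using Tadd[of h t x] Tadd[of t h x] elim assms(2) by (simp add: add.commute)
      then show ?case by (simp add: Dq_def blinfun.scaleR_right blinfun.diff_right)
    qed
  qed
  ultimately have "(Dq T (blinfun_apply (T t) x) \<longlongrightarrow> blinfun_apply (T t) (gen T x)) (at_right 0)"
    using tendsto_cong by fastforce
  then show ?thesis using gen_domI gen_eq by blast
qed


context
  fixes A :: "'x \<Rightarrow> 'x" and D :: "'x set" and C :: "'x \<Rightarrow> 'y::banach"
  assumes genA: "is_minus_generator T A D" and gbl: "graph_bounded_linear A D C"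
begin

lemma D_eq: "D = gen_dom T" using genA by (simp add: is_minus_generator_def)

lemma C_add: "x \<in> D \<Longrightarrow> y \<in> D \<Longrightarrow> C (x + y) = C x + C y"
  using gbl by (simp add: graph_bounded_linear_def)

lemma C_scale: "x \<in> D \<Longrightarrow> C (c *\<^sub>R x) = c *\<^sub>R C x"
  using gbl by (simp add: graph_bounded_linear_def)

lemma C_diff: assumes "x \<in> D" "y \<in> D" shows "C (x - y) = C x - C y"
proof -
  have "x - y \<in> D" using assms gen_diff D_eq by blast
  then have "C ((x - y) + y) = C (x - y) + C y" using C_add assms by blast
  then show ?thesis by simp
qed

lemma C_zero: "C 0 = 0"
  using C_scale[of 0 0] gen_zero D_eq by simp

lemma TD: "x \<in> D \<Longrightarrow> 0 \<le> t \<Longrightarrow> blinfun_apply (T t) x \<in> D"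
  using gen_T D_eq by blast

lemma Ccont: assumes x: "x \<in> D" shows "continuous_on {0..} (\<lambda>t. C (blinfun_apply (T t) x))"
proof -
  obtain K where K: "\<And>z. z \<in> D \<Longrightarrow> norm (C z) \<le> K * (norm z + norm (A z))"
    using gbl unfolding graph_bounded_linear_def by blast
  define g where "g = gen T x"
  show ?thesis unfolding continuous_on_def
  proof
    fix s :: real assume s: "s \<in> {0..}"
    define u where "u t = blinfun_apply (T t) x" for t
    define w where "w t = blinfun_apply (T t) g" for t
    have "(u \<longlongrightarrow> u s) (at s within {0..})"
      using Tcont[of x] s unfolding continuous_on_def u_def by blast
    then have a: "((\<lambda>t. u t - u s) \<longlongrightarrow> 0) (at s within {0..})" by (rule Lim_null[THEN iffD1])
    have "(w \<longlongrightarrow> w s) (at s within {0..})"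
      using Tcont[of g] s unfolding continuous_on_def w_def by blast
    then have b: "((\<lambda>t. w t - w s) \<longlongrightarrow> 0) (at s within {0..})" by (rule Lim_null[THEN iffD1])
    have f0: "((\<lambda>t. norm (u t - u s) + norm (w t - w s)) \<longlongrightarrow> 0) (at s within {0..})"
      using tendsto_add[OF tendsto_norm_zero[OF a] tendsto_norm_zero[OF b]] by simp
    have bnd: "norm (C (u t) - C (u s)) \<le> norm (norm (u t - u s) + norm (w t - w s)) * \<bar>K\<bar>"
      if t: "t \<in> {0..}" for t
    proof -
      have ut: "u t \<in> D" "u s \<in> D" using TD x t s u_def by auto
      have gt: "gen T (u t) = w t" "gen T (u s) = w s"
        using gen_T[of x] x t s D_eq unfolding u_def w_def g_def by auto
      have dd: "u t - u s \<in> D" "gen T (u t - u s) = w t - w s"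
        using gen_diff[of "u t" "u s"] ut D_eq gt by auto
      have "A (u t - u s) = - (w t - w s)"
        using genA dd unfolding is_minus_generator_def by auto
      then have "norm (C (u t - u s)) \<le> K * (norm (u t - u s) + norm (w t - w s))"
        using K[OF dd(1)] by (simp add: norm_minus_commute)
      also have "\<dots> \<le> norm (norm (u t - u s) + norm (w t - w s)) * \<bar>K\<bar>"
        by (simp add: mult.commute mult_right_mono)
      finally show ?thesis using C_diff ut by simp
    qed
    have "((\<lambda>t. C (u t) - C (u s)) \<longlongrightarrow> 0) (at s within {0..})"
      by (rule tendsto_0_le[OF f0]) (use bnd in \<open>auto simp: eventually_at_filter intro!: always_eventually\<close>)
    then show "((\<lambda>t. C (blinfun_apply (T t) x)) \<longlongrightarrow> C (blinfun_apply (T s) x)) (at s within {0..})"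
      unfolding u_def by (rule Lim_null[THEN iffD2])
  qed
qed

lemma Eint: assumes "x \<in> D"
  shows "continuous_on {0..} (\<lambda>t. (norm (C (blinfun_apply (T t) x)))\<^sup>2)"
    "(\<lambda>t. (norm (C (blinfun_apply (T t) x)))\<^sup>2) integrable_on {0..b}"
proof -
  show c: "continuous_on {0..} (\<lambda>t. (norm (C (blinfun_apply (T t) x)))\<^sup>2)"
    by (intro continuous_intros Ccont assms)
  show "(\<lambda>t. (norm (C (blinfun_apply (T t) x)))\<^sup>2) integrable_on {0..b}"
      by (intro integrable_continuous_interval continuous_on_subset[OF c]) auto
qed


lemma E_split: assumes x: "x \<in> D" and "0 \<le> \<eta>" "\<eta> \<le> \<tau>"
  shows "obs_energy T C \<tau> x = obs_energy T C \<eta> x + obs_energy T C (\<tau>-\<eta>) (blinfun_apply (T \<eta>) x)"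
proof -
  define f where "f t = (norm (C (blinfun_apply (T t) x)))\<^sup>2" for t
  have "integral {0..\<eta>} f + integral {\<eta>..\<tau>} f = integral {0..\<tau>} f"
    unfolding f_def by (rule Henstock_Kurzweil_Integration.integral_combine) (use assms Eint(2)[OF x] in auto)
  moreover have "integral {\<eta>..\<tau>} f = integral {0..\<tau>-\<eta>} (\<lambda>t. f (t+\<eta>))"
    using integral_shift_real_ivl[where f=f and a=\<eta> and b=\<tau> and c=\<eta>] by simp
  moreover have "integral {0..\<tau>-\<eta>} (\<lambda>t. f (t+\<eta>)) = obs_energy T C (\<tau>-\<eta>) (blinfun_apply (T \<eta>) x)"
    unfolding obs_energy_def f_def by (rule integral_cong) (use Tadd assms in auto)
  ultimately show ?thesis unfolding obs_energy_def f_def by linarith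
qed

lemma E_nonneg: "x \<in> D \<Longrightarrow> 0 \<le> obs_energy T C s x"
  unfolding obs_energy_def
  by (cases "0 \<le> s") (auto intro!: integral_nonneg Eint(2))

lemma E_mono: assumes "x \<in> D" "0 \<le> s" "s \<le> s'" shows "obs_energy T C s x \<le> obs_energy T C s' x"
  using E_split[OF assms] E_nonneg[OF TD[OF assms(1,2)], of "s' - s"] by linarith

lemma E_scale: assumes x: "x \<in> D" shows "obs_energy T C s (c *\<^sub>R x) = c\<^sup>2 * obs_energy T C s x"
proof -
  define g where "g t = (norm (C (blinfun_apply (T t) x)))\<^sup>2" for t
  have "obs_energy T C s (c *\<^sub>R x) = integral {0..s} (\<lambda>t. c\<^sup>2 * g t)"
    unfolding obs_energy_def
  proof (rule integral_cong)
    fix t assume "t \<in> {0..s}"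
    then have "C (blinfun_apply (T t) (c *\<^sub>R x)) = c *\<^sub>R C (blinfun_apply (T t) x)"
      using C_scale TD x by (simp add: blinfun.scaleR_right)
    then show "(norm (C (blinfun_apply (T t) (c *\<^sub>R x))))\<^sup>2 = c\<^sup>2 * g t"
      by (simp add: g_def power_mult_distrib)
  qed
  also have "\<dots> = c\<^sup>2 * integral {0..s} g" using integral_cmul[where c="c^2" and f=g and S="{0..s}"] by simp
  finally show ?thesis unfolding obs_energy_def g_def .
qed

lemma E_zero: "obs_energy T C s 0 = 0"
  unfolding obs_energy_def by (simp add: blinfun.zero_right C_zero)

lemma E_le_M: assumes y: "y \<in> D" and M: "M_sq T D C s \<le> ereal Mr"
  shows "obs_energy T C s y \<le> Mr * (norm y)\<^sup>2"
proof (cases "y = 0")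
  case True then show ?thesis by (simp add: E_zero)
next
  case False
  define u where "u = (1 / norm y) *\<^sub>R y"
  have u: "u \<in> D" "norm u = 1" using y False gen_scale D_eq by (auto simp: u_def)
  have "ereal (obs_energy T C s u) \<le> M_sq T D C s"
    unfolding M_sq_def using u by (intro SUP_upper) auto
  then have "ereal (obs_energy T C s u) \<le> ereal Mr" using M by (rule order_trans)
  then have "obs_energy T C s u \<le> Mr" by simp
  moreover have "y = norm y *\<^sub>R u" using False by (simp add: u_def)
  then have "obs_energy T C s y = (norm y)\<^sup>2 * obs_energy T C s u"
    using E_scale[OF u(1), of s "norm y"] by simp
  ultimately show ?thesis by (metis mult.commute mult_right_mono zero_le_power2)
qed

lemma m_le_E: assumes u: "u \<in> D" "norm u = 1"
  shows "m_sq T D C s \<le> ereal (obs_energy T C s u)"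
  unfolding m_sq_def using u by (intro INF_lower) auto

end
end



lemma vd_right_lim:
  fixes F :: "real \<Rightarrow> 'a::real_normed_vector"
  assumes "(F has_vector_derivative v) (at h within S)" "{h..h+e} \<subseteq> S" "e>0"
  shows "((\<lambda>r. (1/r) *\<^sub>R (F (h+r) - F h)) \<longlongrightarrow> v) (at_right 0)"
proof -
  from assms(1) have L: "((\<lambda>y. ((F y - F h) - (y - h) *\<^sub>R v) /\<^sub>R norm (y - h)) \<longlongrightarrow> 0) (at h within S)"
    by (simp add: has_vector_derivative_def has_derivative_at_within)
  have ev: "eventually (\<lambda>r. 0 < r \<and> r < e) (at_right (0::real))"
    using assms(3) eventually_at_right_field by blast
  have fl: "filterlim (\<lambda>r. h + r) (at h within S) (at_right 0)"
  proof (subst filterlim_at, intro conjI)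
    show "\<forall>\<^sub>F x in at_right 0. h + x \<in> S \<and> h + x \<noteq> h"
      using ev by eventually_elim (use assms(2) in auto)
    show "((+) h \<longlongrightarrow> h) (at_right 0)"
      by (intro tendsto_eq_intros) (auto intro: tendsto_within_subset)
  qed
  have "((\<lambda>r. ((F (h+r) - F h) - r *\<^sub>R v) /\<^sub>R norm r) \<longlongrightarrow> 0) (at_right 0)"
    using filterlim_compose[OF L fl] by simp
  then have "((\<lambda>r. ((F (h+r) - F h) - r *\<^sub>R v) /\<^sub>R norm r + v) \<longlongrightarrow> 0 + v) (at_right 0)"
    by (intro tendsto_add) auto
  moreover have E: "eventually (\<lambda>r. ((F (h+r) - F h) - r *\<^sub>R v) /\<^sub>R norm r + v = (1/r) *\<^sub>R (F (h+r) - F h)) (at_right 0)"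
    using ev by eventually_elim (auto simp: algebra_simps divide_simps)
  ultimately show ?thesis using tendsto_cong[OF E] by simp
qed


context
  fixes T :: "real \<Rightarrow> 'x::banach \<Rightarrow>\<^sub>L 'x"
  assumes sg: "c0_semigroup T"
begin

lemma dense_gen: "x \<in> closure (gen_dom T)"
proof -
  define f where "f s = blinfun_apply (T s) x" for s
  have fc: "continuous_on {0..} f" unfolding f_def using Tcont[OF sg] .
  have int: "f integrable_on {a..b}" if "0 \<le> a" for a b
    using that by (intro integrable_continuous_interval continuous_on_subset[OF fc]) auto
  define F where "F u = integral {0..u} f" for u
  have Fd: "(F has_vector_derivative f h) (at h within {0..h+1})" if "0 \<le> h" for h
    unfolding F_def using that
    by (intro integral_has_vector_derivative continuous_on_subset[OF fc]) auto
  have F0: "F 0 = 0" by (simp add: F_def)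
  have key: "blinfun_apply (T r) (F h) = F (h + r) - F r" if "0 \<le> h" "0 \<le> r" for h r
  proof -
    have "blinfun_apply (T r) (F h) = integral {0..h} (\<lambda>s. blinfun_apply (T r) (f s))"
      unfolding F_def using integral_blinfun_apply[OF int[of 0 h], of "T r"] by simp
    also have "\<dots> = integral {0..h} (\<lambda>s. f (s + r))"
    proof (rule integral_cong)
      fix s assume "s \<in> {0..h}"
      then have "blinfun_apply (T (r + s)) x = blinfun_apply (T r) (blinfun_apply (T s) x)"
        using Tadd[OF sg, of r s x] that by auto
      then show "blinfun_apply (T r) (f s) = f (s + r)" by (simp add: f_def add.commute)
    qed
    also have "\<dots> = integral {r..h+r} f"
      using integral_shift_real_ivl[where f=f and a=r and b="h+r" and c=r] by simp
    also have "\<dots> = F (h + r) - F r"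
    proof -
      have "integral {0..r} f + integral {r..h + r} f = integral {0..h + r} f"
        using Henstock_Kurzweil_Integration.integral_combine[of 0 r "h+r" f] int[of 0 "h+r"] that by simp
      then show ?thesis unfolding F_def by (metis add_diff_cancel_left')
    qed
    finally show ?thesis .
  qed
  have lim: "((\<lambda>r. (1/r) *\<^sub>R (F (h+r) - F h)) \<longlongrightarrow> f h) (at_right 0)" if "0 \<le> h" for h
    by (rule vd_right_lim[OF Fd[OF that], where e=1]) (use that in auto)
  have inD: "F h \<in> gen_dom T" if "0 \<le> h" for h
  proof -
    have "((\<lambda>r. (1/r) *\<^sub>R (F (h+r) - F h) - (1/r) *\<^sub>R (F (0+r) - F 0)) \<longlongrightarrow> f h - f 0) (at_right 0)"
      using lim[OF that] lim[of 0] by (intro tendsto_diff) auto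
    moreover have "eventually (\<lambda>r. (1/r) *\<^sub>R (F (h+r) - F h) - (1/r) *\<^sub>R (F (0+r) - F 0) = Dq T (F h) r) (at_right 0)"
    proof -
      have "eventually (\<lambda>r::real. r > 0) (at_right 0)" by (simp add: eventually_at_right_less)
      then show ?thesis
      proof eventually_elim
        case (elim r)
        then have "F (h + r) = F r + blinfun_apply (T r) (F h)" using key[OF that, of r] by simp
        then have "(F (h + r) - F h) - (F (0+r) - F 0) = blinfun_apply (T r) (F h) - F h" using F0 by simp
        then show ?case unfolding Dq_def by (metis scaleR_diff_right)
      qed
    qed
    ultimately have "(Dq T (F h) \<longlongrightarrow> f h - f 0) (at_right 0)"
      using tendsto_cong by fastforce
    then show ?thesis by (rule gen_domI[OF sg])
  qed
  have "((\<lambda>r. (1/r) *\<^sub>R (F (0+r) - F 0)) \<longlongrightarrow> f 0) (at_right 0)" by (rule lim) simp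
  then have L: "((\<lambda>r. (1/r) *\<^sub>R F r) \<longlongrightarrow> x) (at_right 0)"
    using F0 T0[OF sg] by (simp add: f_def)
  show ?thesis
  proof (rule Lim_in_closed_set[OF closed_closure _ _ L])
    show "at_right (0::real) \<noteq> bot" by simp
    have "eventually (\<lambda>r::real. r > 0) (at_right 0)" by (simp add: eventually_at_right_less)
    then show "eventually (\<lambda>r. (1/r) *\<^sub>R F r \<in> closure (gen_dom T)) (at_right 0)"
      by eventually_elim (use inD gen_scale[OF sg] closure_subset in force)
  qed
qed

end



lemma closed_span_fin:
  fixes S :: "'a::real_normed_vector set"
  assumes "finite S" shows "closed (span S)"
  using assms
proof (induction S rule: finite_induct)
  case empty show ?case by simp
next
  case (insert a S)
  show ?case
  proof (cases "a \<in> span S")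
    case True then show ?thesis using insert by (simp add: span_redundant)
  next
    case False
    define d where "d = infdist a (span S)"
    have d: "d > 0" unfolding d_def
      using False insert.IH in_closed_iff_infdist_zero[of "span S" a] infdist_nonneg[of a "span S"]
      by (metis less_eq_real_def span_zero empty_iff)
    have key: "\<bar>t\<bar> * d \<le> norm (v + t *\<^sub>R a)" if v: "v \<in> span S" for v t
    proof (cases "t = 0")
      case True then show ?thesis by simp
    next
      case False
      have "-(1/t) *\<^sub>R v \<in> span S" using v span_scale span_neg by blast
      then have "d \<le> dist a (-(1/t) *\<^sub>R v)" unfolding d_def by (rule infdist_le)
      also have "dist a (-(1/t) *\<^sub>R v) = norm (v + t *\<^sub>R a) / \<bar>t\<bar>"
      proof -
        have "v + t *\<^sub>R a = t *\<^sub>R (a - (-(1/t) *\<^sub>R v))" using False by (simp add: algebra_simps)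
        then have "norm (v + t *\<^sub>R a) = \<bar>t\<bar> * dist a (-(1/t) *\<^sub>R v)" by (simp add: dist_norm)
        then show ?thesis using False by simp
      qed
      finally show ?thesis using False by (simp add: field_simps)
    qed
    show ?thesis unfolding closed_sequential_limits
    proof (intro allI impI, elim conjE)
      fix x l assume xs: "\<forall>n. x n \<in> span (insert a S)" and xl: "x \<longlonglongrightarrow> l"
      have "\<forall>n. \<exists>k. x n - k *\<^sub>R a \<in> span S" using xs by (simp add: span_insert)
      then obtain t where t: "\<And>n. x n - t n *\<^sub>R a \<in> span S" by metis
      obtain B where B: "\<And>n. norm (x n) \<le> B"
        using convergent_imp_bounded[OF xl] unfolding bounded_iff by auto
      have tb: "\<bar>t n\<bar> \<le> B / d" for n
      proof -
        have "\<bar>t n\<bar> * d \<le> norm ((x n - t n *\<^sub>R a) + t n *\<^sub>R a)" by (rule key[OF t])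
        also have "\<dots> \<le> B" using B by simp
        finally show ?thesis using d by (simp add: field_simps)
      qed
      have "bounded (range t)" using tb unfolding bounded_iff by auto
      then obtain c r where r: "strict_mono r" "(t \<circ> r) \<longlonglongrightarrow> c"
        using bounded_imp_convergent_subsequence[of t] by auto
      have "(\<lambda>n. x (r n) - (t \<circ> r) n *\<^sub>R a) \<longlonglongrightarrow> l - c *\<^sub>R a"
        by (intro tendsto_intros LIMSEQ_subseq_LIMSEQ[OF xl r(1), unfolded comp_def] r(2))
      moreover have "\<forall>n. x (r n) - (t \<circ> r) n *\<^sub>R a \<in> span S" using t by simp
      ultimately have "l - c *\<^sub>R a \<in> span S"
        using closed_sequentially[OF insert.IH, of "\<lambda>n. x (r n) - (t \<circ> r) n *\<^sub>R a"] by blast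
      then show "l \<in> span (insert a S)" by (auto simp: span_insert)
    qed
  qed
qed

lemma compact_ball_findim:
  assumes "compact (cball (0::'a::real_normed_vector) 1)"
  shows "\<exists>B::'a set. finite B \<and> span B = UNIV"
proof -
  have cov: "cball (0::'a) 1 \<subseteq> (\<Union>c\<in>cball 0 1. ball c (1/2))"
  proof
    fix x :: 'a assume "x \<in> cball 0 1"
    then show "x \<in> (\<Union>c\<in>cball 0 1. ball c (1/2))" by (intro UN_I[of x]) auto
  qed
  obtain F where F: "F \<subseteq> cball 0 1" "finite F" "cball (0::'a) 1 \<subseteq> (\<Union>c\<in>F. ball c (1/2))"
    using compactE_image[OF assms open_ball cov] by blast
  have step: "\<exists>c\<in>F. norm (w - c) < 1/2" if "norm w \<le> 1" for w
  proof -
    have "w \<in> cball 0 1" using that by simp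
    then obtain c where "c\<in>F" "w \<in> ball c (1/2)" using F(3) by blast
    then show ?thesis by (auto simp: dist_norm norm_minus_commute)
  qed
  have P: "\<exists>v\<in>span F. norm (x - v) \<le> norm x / 2^k" for k x
  proof (induction k)
    case 0 show ?case by (intro bexI[of _ 0]) (auto simp: span_zero)
  next
    case (Suc k)
    then obtain v where v: "v \<in> span F" "norm (x - v) \<le> norm x / 2^k" by blast
    show ?case
    proof (cases "x - v = 0")
      case True then show ?thesis using v by (intro bexI[of _ v]) auto
    next
      case False
      define y where "y = x - v"
      have ny: "norm y > 0" using False y_def by simp
      obtain c where c: "c \<in> F" "norm ((1/norm y) *\<^sub>R y - c) < 1/2"
        using step[of "(1/norm y) *\<^sub>R y"] ny by auto
      have "norm y *\<^sub>R c \<in> span F" using c by (intro span_scale span_base)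
      then have "v + norm y *\<^sub>R c \<in> span F" using v by (intro span_add)
      moreover have "norm (x - (v + norm y *\<^sub>R c)) \<le> norm x / 2^Suc k"
      proof -
        have "x - (v + norm y *\<^sub>R c) = norm y *\<^sub>R ((1/norm y) *\<^sub>R y - c)"
          using ny by (simp add: y_def algebra_simps)
        then have "norm (x - (v + norm y *\<^sub>R c)) = norm y * norm ((1/norm y) *\<^sub>R y - c)"
          by simp
        also have "\<dots> \<le> norm y * (1/2)" using c ny by (intro mult_left_mono) auto
        also have "\<dots> \<le> norm x / 2^Suc k" using v(2) y_def by simp
        finally show ?thesis .
      qed
      ultimately show ?thesis by blast
    qed
  qed
  have "x \<in> span F" for x
  proof -
    have "x \<in> closure (span F)"
      unfolding closure_approachable
    proof (intro allI impI)
      fix e :: real assume e: "e > 0"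
      obtain k where k: "norm x / e < 2^k" using real_arch_pow[of 2 "norm x / e"] by auto
      obtain v where "v \<in> span F" "norm (x - v) \<le> norm x / 2^k" using P by blast
      moreover have "norm x / 2^k < e" using k e by (simp add: field_simps)
      ultimately show "\<exists>y\<in>span F. dist y x < e" by (force simp: dist_norm norm_minus_commute)
    qed
    then show ?thesis using closed_span_fin[OF F(2)] by simp
  qed
  then show ?thesis using F(2) by blast
qed




lemma compact_comp:
  assumes "compact_op S"
  shows "compact (closure ((\<lambda>x. blinfun_apply R (blinfun_apply S x)) ` ball 0 1))"
proof -
  define K where "K = closure (blinfun_apply S ` ball 0 1)"
  have K: "compact K" using assms unfolding compact_op_def K_def .
  have RK: "compact (blinfun_apply R ` K)"
    by (intro compact_continuous_image K continuous_intros)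
  have sub: "(\<lambda>x. blinfun_apply R (blinfun_apply S x)) ` ball 0 1 \<subseteq> blinfun_apply R ` K"
    unfolding K_def using closure_subset by fastforce
  have "closure ((\<lambda>x. blinfun_apply R (blinfun_apply S x)) ` ball 0 1) \<subseteq> blinfun_apply R ` K"
    by (rule closure_minimal[OF sub compact_imp_closed[OF RK]])
  then have "closure ((\<lambda>x. blinfun_apply R (blinfun_apply S x)) ` ball 0 1)
     = blinfun_apply R ` K \<inter> closure ((\<lambda>x. blinfun_apply R (blinfun_apply S x)) ` ball 0 1)" by blast
  then show ?thesis using compact_Int_closed[OF RK closed_closure, of "(\<lambda>x. blinfun_apply R (blinfun_apply S x)) ` ball 0 1"] by simp
qed

lemma bb_compact:
  fixes S :: "'a::banach \<Rightarrow>\<^sub>L 'a"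
  assumes K: "compact (closure (blinfun_apply S ` ball 0 1))" and d: "d > 0"
    and bb: "\<And>x. d * norm x \<le> norm (blinfun_apply S x)"
  shows "compact (cball (0::'a) 1)"
proof -
  have sK: "seq_compact (closure (blinfun_apply S ` ball 0 1))"
    using K compact_imp_seq_compact by blast
  show ?thesis unfolding compact_eq_seq_compact_metric
  proof (rule seq_compactI)
    fix f :: "nat \<Rightarrow> 'a" assume f: "\<forall>n. f n \<in> cball 0 1"
    define g where "g n = (1/2) *\<^sub>R f n" for n
    have g: "g n \<in> ball 0 1" for n
    proof -
      have "norm (f n) \<le> 1" using f by simp
      then show ?thesis by (simp add: g_def)
    qed
    have "\<forall>n. blinfun_apply S (g n) \<in> closure (blinfun_apply S ` ball 0 1)"
      using g closure_subset by fastforce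
    then obtain l r where r: "strict_mono r" "((\<lambda>n. blinfun_apply S (g n)) \<circ> r) \<longlonglongrightarrow> l"
      using seq_compactE[OF sK] by metis
    have "Cauchy ((\<lambda>n. blinfun_apply S (g n)) \<circ> r)" using r(2) by (rule LIMSEQ_imp_Cauchy)
    then have "Cauchy (g \<circ> r)"
      unfolding Cauchy_def
    proof (intro allI impI)
      fix e :: real assume e: "e > 0"
      assume C: "\<forall>e>0. \<exists>M. \<forall>m\<ge>M. \<forall>n\<ge>M. dist (((\<lambda>n. blinfun_apply S (g n)) \<circ> r) m) (((\<lambda>n. blinfun_apply S (g n)) \<circ> r) n) < e"
      obtain M where M: "\<forall>m\<ge>M. \<forall>n\<ge>M. dist (((\<lambda>n. blinfun_apply S (g n)) \<circ> r) m) (((\<lambda>n. blinfun_apply S (g n)) \<circ> r) n) < d * e"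
        using C d e by (meson mult_pos_pos)
      show "\<exists>M. \<forall>m\<ge>M. \<forall>n\<ge>M. dist ((g \<circ> r) m) ((g \<circ> r) n) < e"
      proof (intro exI allI impI)
        fix m n assume "M \<le> m" "M \<le> n"
        then have "norm (blinfun_apply S (g (r m)) - blinfun_apply S (g (r n))) < d * e"
          using M by (auto simp: dist_norm)
        moreover have "d * norm (g (r m) - g (r n)) \<le> norm (blinfun_apply S (g (r m)) - blinfun_apply S (g (r n)))"
          using bb[of "g (r m) - g (r n)"] by (simp add: blinfun.diff_right)
        ultimately have "d * norm (g (r m) - g (r n)) < d * e" by linarith
        then show "dist ((g \<circ> r) m) ((g \<circ> r) n) < e" using d by (simp add: dist_norm)
      qed
    qed
    then obtain l' where l': "(g \<circ> r) \<longlonglongrightarrow> l'" using Cauchy_convergent_iff convergent_def by blast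
    have "(\<lambda>n. 2 *\<^sub>R (g \<circ> r) n) \<longlonglongrightarrow> 2 *\<^sub>R l'" by (intro tendsto_intros l')
    moreover have "(\<lambda>n. 2 *\<^sub>R (g \<circ> r) n) = f \<circ> r" by (auto simp: g_def)
    ultimately have fl: "(f \<circ> r) \<longlonglongrightarrow> 2 *\<^sub>R l'" by simp
    have "2 *\<^sub>R l' \<in> cball 0 1"
      by (rule closed_sequentially[OF closed_cball _ fl]) (use f in simp)
    then show "\<exists>l\<in>cball 0 1. \<exists>r::nat\<Rightarrow>nat. strict_mono r \<and> (f \<circ> r) \<longlonglongrightarrow> l"
      using fl r(1) by blast
  qed
qed




theorem proposition3p8:
  fixes T :: "real \<Rightarrow> 'x::banach \<Rightarrow>\<^sub>L 'x"
    and A :: "'x \<Rightarrow> 'x" and D :: "'x set"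
    and C :: "'x \<Rightarrow> 'y::banach"
  assumes "c0_semigroup T"
    and "is_minus_generator T A D"
    and "graph_bounded_linear A D C"
    and "BFC_system T D C"
    and "\<exists>t>0. compact_op (T t)"
  shows "finite_dim_space TYPE('x)"
proof -
  note sg = assms(1) and genA = assms(2) and gbl = assms(3)
  note DE = D_eq[OF sg genA gbl]
  obtain \<eta> \<tau> where h: "0 < \<eta>" "\<eta> < \<tau>" and adm: "M_sq T D C \<tau> < \<infinity>"
    and obs: "m_sq T D C \<tau> > 0" and bfc: "M_sq T D C \<eta> < m_sq T D C \<tau>"
    using assms(4) unfolding BFC_system_def admissible_in_time_def exactly_observable_in_time_def by blast
  obtain t0 where t0: "t0 > 0" "compact_op (T t0)" using assms(5) by blast
  have lb: "\<exists>c>0. \<forall>x\<in>D. c * norm x \<le> norm (blinfun_apply (T \<eta>) x)"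
  proof (cases "\<exists>u\<in>D. norm u = 1")
    case False
    have "x = 0" if "x \<in> D" for x
    proof (rule ccontr)
      assume "x \<noteq> 0"
      then have "(1 / norm x) *\<^sub>R x \<in> D" "norm ((1 / norm x) *\<^sub>R x) = 1"
        using that gen_scale[OF sg] DE by auto
      then show False using False by blast
    qed
    then have "\<forall>x\<in>D. 1 * norm x \<le> norm (blinfun_apply (T \<eta>) x)" by force
    then show ?thesis by (intro exI[of _ 1]) auto
  next
    case True
    then obtain u where u: "u \<in> D" "norm u = 1" by blast
    have Eu: "0 \<le> obs_energy T C s u" for s using E_nonneg[OF sg genA gbl u(1)] .
    have mle: "m_sq T D C \<tau> \<le> ereal (obs_energy T C \<tau> u)" by (rule m_le_E[OF sg genA gbl u])
    obtain mr where mr: "m_sq T D C \<tau> = ereal mr" using mle obs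
      by (cases "m_sq T D C \<tau>") auto
    have mr0: "mr > 0" using obs mr by simp
    have Meg: "ereal (obs_energy T C \<eta> u) \<le> M_sq T D C \<eta>"
      unfolding M_sq_def using u by (intro SUP_upper) auto
    obtain M1 where M1: "M_sq T D C \<eta> = ereal M1" using Meg bfc mr
      by (cases "M_sq T D C \<eta>") auto
    have M1mr: "M1 < mr" using bfc M1 mr by simp
    have Mtg: "ereal (obs_energy T C \<tau> u) \<le> M_sq T D C \<tau>"
      unfolding M_sq_def using u by (intro SUP_upper) auto
    obtain M2 where M2: "M_sq T D C \<tau> = ereal M2" using Mtg adm
      by (cases "M_sq T D C \<tau>") auto
    have M2mr: "mr \<le> M2" using mle Mtg mr M2 by simp
    define c where "c = sqrt ((mr - M1) / M2)"
    have c0: "c > 0" using M1mr M2mr mr0 by (simp add: c_def)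
    have key: "c * norm x \<le> norm (blinfun_apply (T \<eta>) x)" if x: "x \<in> D" for x
    proof (cases "x = 0")
      case True then show ?thesis by (simp add: blinfun.zero_right)
    next
      case False
      define v where "v = (1 / norm x) *\<^sub>R x"
      have v: "v \<in> D" "norm v = 1" using x False gen_scale[OF sg] DE by (auto simp: v_def)
      have xv: "x = norm x *\<^sub>R v" using False by (simp add: v_def)
      have "ereal mr \<le> ereal (obs_energy T C \<tau> v)" using m_le_E[OF sg genA gbl v, of \<tau>] mr by simp
      then have "mr \<le> obs_energy T C \<tau> v" by simp
      then have "mr * (norm x)\<^sup>2 \<le> obs_energy T C \<tau> x"
        using E_scale[OF sg genA gbl v(1), of \<tau> "norm x"] xv by (simp add: mult.commute mult_right_mono)
      also have "\<dots> = obs_energy T C \<eta> x + obs_energy T C (\<tau>-\<eta>) (blinfun_apply (T \<eta>) x)"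
        using E_split[OF sg genA gbl x, of \<eta> \<tau>] h by simp
      also have "\<dots> \<le> M1 * (norm x)\<^sup>2 + M2 * (norm (blinfun_apply (T \<eta>) x))\<^sup>2"
      proof (rule add_mono)
        show "obs_energy T C \<eta> x \<le> M1 * (norm x)\<^sup>2" using E_le_M[OF sg genA gbl x] M1 by simp
        have Tx: "blinfun_apply (T \<eta>) x \<in> D" using TD[OF sg genA gbl x] h by simp
        have "obs_energy T C (\<tau>-\<eta>) (blinfun_apply (T \<eta>) x) \<le> obs_energy T C \<tau> (blinfun_apply (T \<eta>) x)"
          using E_mono[OF sg genA gbl Tx] h by simp
        also have "\<dots> \<le> M2 * (norm (blinfun_apply (T \<eta>) x))\<^sup>2" using E_le_M[OF sg genA gbl Tx] M2 by simp
        finally show "obs_energy T C (\<tau>-\<eta>) (blinfun_apply (T \<eta>) x) \<le> M2 * (norm (blinfun_apply (T \<eta>) x))\<^sup>2" .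
      qed
      finally have "(mr - M1) * (norm x)\<^sup>2 \<le> M2 * (norm (blinfun_apply (T \<eta>) x))\<^sup>2"
        by (simp add: algebra_simps)
      then have "(mr - M1) / M2 * (norm x)\<^sup>2 \<le> (norm (blinfun_apply (T \<eta>) x))\<^sup>2"
        using M2mr mr0 by (simp add: field_simps)
      then have "(c * norm x)\<^sup>2 \<le> (norm (blinfun_apply (T \<eta>) x))\<^sup>2"
        using M1mr M2mr mr0 by (simp add: c_def power_mult_distrib)
      then show ?thesis by (rule power2_le_imp_le) simp
    qed
    show ?thesis using c0 key by blast
  qed
  then obtain c where c: "c > 0" "\<And>x. x \<in> D \<Longrightarrow> c * norm x \<le> norm (blinfun_apply (T \<eta>) x)" by blast
  have call: "c * norm x \<le> norm (blinfun_apply (T \<eta>) x)" for x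
  proof -
    have cl: "closed {x. c * norm x \<le> norm (blinfun_apply (T \<eta>) x)}"
      by (intro closed_Collect_le continuous_intros)
    have "D \<subseteq> {x. c * norm x \<le> norm (blinfun_apply (T \<eta>) x)}" using c by auto
    then have "closure D \<subseteq> {x. c * norm x \<le> norm (blinfun_apply (T \<eta>) x)}"
      by (rule closure_minimal[OF _ cl])
    moreover have "x \<in> closure D" using dense_gen[OF sg] DE by simp
    ultimately show ?thesis by blast
  qed
  have pow: "c ^ n * norm x \<le> norm (blinfun_apply (T (real n * \<eta>)) x)" for n x
  proof (induction n arbitrary: x)
    case 0 then show ?case using T0[OF sg] by simp
  next
    case (Suc n)
    have "blinfun_apply (T (real (Suc n) * \<eta>)) x = blinfun_apply (T \<eta>) (blinfun_apply (T (real n * \<eta>)) x)"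
      using Tadd[OF sg, of \<eta> "real n * \<eta>" x] h by (simp add: algebra_simps)
    moreover have "c ^ Suc n * norm x \<le> c * norm (blinfun_apply (T (real n * \<eta>)) x)"
      using Suc.IH[of x] c(1) by (simp add: mult.assoc mult_left_mono)
    ultimately show ?case using call[of "blinfun_apply (T (real n * \<eta>)) x"] by simp
  qed
  obtain n :: nat where n: "t0 / \<eta> < real n" using reals_Archimedean2 by blast
  have nt: "t0 \<le> real n * \<eta>" using n h by (simp add: field_simps)
  have eqT: "blinfun_apply (T (real n * \<eta>)) x = blinfun_apply (T (real n * \<eta> - t0)) (blinfun_apply (T t0) x)" for x
    using Tadd[OF sg, of "real n * \<eta> - t0" t0 x] nt t0 by simp
  have cmp: "compact (closure (blinfun_apply (T (real n * \<eta>)) ` ball 0 1))"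
    using compact_comp[OF t0(2), of "T (real n * \<eta> - t0)"] eqT by simp
  have "compact (cball (0::'x) 1)"
    by (rule bb_compact[OF cmp _ pow]) (use c in simp)
  then show ?thesis unfolding finite_dim_space_def using compact_ball_findim by blast
qed


end
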